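(* Under the assumptions of Theorem 4.1 (with $k\ge1$), define $$h^{(u)}(D_A)=\min\Big\{H(D_U)+\sum_{t=1}^k H(W_t),\ -\sum_{t=1}^k\log(1-P_{W_t})\Big\}$$ and, writing $\pi=\prod_{t=1}^k P_{W_t}$, $$h^{(l)}(D_A)=\max\Big\{-\sum_{t=1}^k\log P_{W_t},\ H(D_U)+\sum_{t=1}^kH(W_t)+\pi\log\pi+(1-\pi)\log(1-\pi)-(1-\pi)\min\{\log(2^k-1),H(D_U)\}\Big\}.$$ Then $h^{(l)}(D_A)\le H(D_A)\le h^{(u)}(D_A)$.
   Context: A result set $R$ is a finite set of possible matchings $m_j\subseteq C$ with $\mathbb{P}:R\to[0,1]$ summing to 1; the correct matching $M$ is distributed by $\mathbb{P}$. For distinct $c_1,\dots,c_k\in C$ and accuracies $P_{W_1},\dots,P_{W_k}\in[0.5,1]$, the answers $A_{c_t}\in\{Y,N\}$ are conditionally independent given $M$, with $\mathbb{P}(A_{c_t}=Y\mid M)=P_{W_t}$ if $c_t\in M$ and $1-P_{W_t}$ otherwise. $H(D_A)=-\sum_{a\in\{Y,N\}^k}\mathbb{P}(a)\log\mathbb{P}(a)$ is the joint entropy of the answer vector. $U=(\mathbf{1}[c_1\in M],\dots,\mathbf{1}[c_k\in M])\in\{T,F\}^k$ and $H(D_U)$ is its joint entropy, where $\mathbb{P}(U=u)=\sum_{m_j:\ (\mathbf{1}[c_t\in m_j])_t=u}\mathbb{P}(m_j)$. $H(W_t)=-P_{W_t}\log P_{W_t}-(1-P_{W_t})\log(1-P_{W_t})$.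 Logarithms base 2, $0\log0=0$, and $-\log 0=+\infty$ (so the second term of $h^{(u)}$ is $+\infty$ if some $P_{W_t}=1$). *)

theory Defs
  imports Complex_Main "HOL-Library.Extended_Real"
begin

definition plogp :: "real \<Rightarrow> real" where
  "plogp x = (if x = 0 then 0 else x * log 2 x)"

text \<open>Answer vectors / membership vectors of length k (index t = 0..k-1 stands for c_{t+1});
  True = Y (resp. T), False = N (resp. F).\<close>
definition vecs :: "nat \<Rightarrow> bool list set" where
  "vecs k = {xs. length xs = k}"

text \<open>P(A = a): answers conditionally independent given the correct matching M.\<close>
definition probA :: "'c set set \<Rightarrow> ('c set \<Rightarrow> real) \<Rightarrow> (nat \<Rightarrow> 'c) \<Rightarrow> (nat \<Rightarrow> real)
    \<Rightarrow> nat \<Rightarrow> bool list \<Rightarrow> real" where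
  "probA R P c pw k a =
     (\<Sum>m\<in>R. P m * (\<Prod>t<k. if a ! t = (c t \<in> m) then pw t else 1 - pw t))"

definition probU :: "'c set set \<Rightarrow> ('c set \<Rightarrow> real) \<Rightarrow> (nat \<Rightarrow> 'c) \<Rightarrow> nat
    \<Rightarrow> bool list \<Rightarrow> real" where
  "probU R P c k u = (\<Sum>m\<in>{m\<in>R. map (\<lambda>t. c t \<in> m) [0..<k] = u}. P m)"

definition H_A :: "'c set set \<Rightarrow> ('c set \<Rightarrow> real) \<Rightarrow> (nat \<Rightarrow> 'c) \<Rightarrow> (nat \<Rightarrow> real)
    \<Rightarrow> nat \<Rightarrow> real" where
  "H_A R P c pw k = - (\<Sum>a\<in>vecs k. plogp (probA R P c pw k a))"

definition H_U :: "'c set set \<Rightarrow> ('c set \<Rightarrow> real) \<Rightarrow> (nat \<Rightarrow> 'c) \<Rightarrow> nat \<Rightarrow> real" where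
  "H_U R P c k = - (\<Sum>u\<in>vecs k. plogp (probU R P c k u))"

definition H_W :: "real \<Rightarrow> real" where
  "H_W p = - plogp p - plogp (1 - p)"

definition h_upper :: "'c set set \<Rightarrow> ('c set \<Rightarrow> real) \<Rightarrow> (nat \<Rightarrow> 'c) \<Rightarrow> (nat \<Rightarrow> real)
    \<Rightarrow> nat \<Rightarrow> ereal" where
  "h_upper R P c pw k =
     min (ereal (H_U R P c k + (\<Sum>t<k. H_W (pw t))))
         (if \<exists>t<k. pw t = 1 then \<infinity> else ereal (- (\<Sum>t<k. log 2 (1 - pw t))))"

definition h_lower :: "'c set set \<Rightarrow> ('c set \<Rightarrow> real) \<Rightarrow> (nat \<Rightarrow> 'c) \<Rightarrow> (nat \<Rightarrow> real)
    \<Rightarrow> nat \<Rightarrow> real" where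
  "h_lower R P c pw k =
     (let \<pi> = (\<Prod>t<k. pw t) in
      max (- (\<Sum>t<k. log 2 (pw t)))
          (H_U R P c k + (\<Sum>t<k. H_W (pw t)) + plogp \<pi> + plogp (1 - \<pi>)
            - (1 - \<pi>) * min (log 2 (2 ^ k - 1)) (H_U R P c k)))"

end

theory Submission
  imports Defs
begin

lemma plogp_eq: "plogp x = x * log 2 x"
  by (simp add: plogp_def)

lemma vecs_0: "vecs 0 = {[]}"
  by (auto simp: vecs_def)

lemma vecs_Suc: "vecs (Suc k) = (\<lambda>(b,xs). b # xs) ` (UNIV \<times> vecs k)"
  by (auto simp: vecs_def image_iff length_Suc_conv)

lemma finite_vecs: "finite (vecs k)"
  by (induction k) (auto simp: vecs_0 vecs_Suc)

lemma sum_prod_vecs: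
  fixes f :: "nat \<Rightarrow> bool \<Rightarrow> real"
  shows "(\<Sum>a\<in>vecs k. \<Prod>t<k. f t (a ! t)) = (\<Prod>t<k. f t True + f t False)"
proof (induction k arbitrary: f)
  case 0
  then show ?case by (simp add: vecs_0)
next
  case (Suc k)
  have inj: "inj_on (\<lambda>(b,xs). b # xs) (UNIV \<times> vecs k)"
    by (auto simp: inj_on_def)
  have "(\<Sum>a\<in>vecs (Suc k). \<Prod>t<Suc k. f t (a ! t))
      = (\<Sum>(b,xs)\<in>UNIV \<times> vecs k. \<Prod>t<Suc k. f t ((b#xs) ! t))"
    unfolding vecs_Suc by (subst sum.reindex[OF inj]) (simp add: case_prod_unfold)
  also have "\<dots> = (\<Sum>b\<in>UNIV. \<Sum>xs\<in>vecs k. f 0 b * (\<Prod>t<k. f (Suc t) (xs ! t)))"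
    by (subst sum.cartesian_product[symmetric]) (simp del: prod.lessThan_Suc add: prod.lessThan_Suc_shift)
  also have "\<dots> = (\<Sum>b\<in>UNIV. f 0 b * (\<Prod>t<k. f (Suc t) True + f (Suc t) False))"
    using Suc.IH[of "\<lambda>t. f (Suc t)"] by (simp add: sum_distrib_left[symmetric])
  also have "\<dots> = (\<Prod>t<Suc k. f t True + f t False)"
    by (simp del: prod.lessThan_Suc add: UNIV_bool prod.lessThan_Suc_shift algebra_simps)
  finally show ?case .
qed

lemma card_vecs: "card (vecs k) = 2 ^ k"
proof -
  have "real (card (vecs k)) = (\<Sum>a\<in>vecs k. \<Prod>t<k. (\<lambda>t b. 1::real) t (a ! t))"
    by simp
  also have "\<dots> = 2 ^ k" by (subst sum_prod_vecs) simp
  finally show ?thesis by (simp add: of_nat_eq_iff[symmetric])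
qed


definition qf :: "(nat \<Rightarrow> real) \<Rightarrow> bool list \<Rightarrow> nat \<Rightarrow> bool \<Rightarrow> real" where
  "qf pw u t b = (if b = u ! t then pw t else 1 - pw t)"

definition Qf :: "(nat \<Rightarrow> real) \<Rightarrow> nat \<Rightarrow> bool list \<Rightarrow> bool list \<Rightarrow> real" where
  "Qf pw k u a = (\<Prod>t<k. qf pw u t (a ! t))"

lemma qf_sum: "qf pw u t True + qf pw u t False = 1"
  by (cases "u ! t") (auto simp: qf_def)

lemma sum_Qf: "(\<Sum>a\<in>vecs k. Qf pw k u a) = 1"
  unfolding Qf_def by (subst sum_prod_vecs) (simp add: qf_sum)

lemma Qf_nonneg:
  assumes "\<forall>t<k. 0 \<le> pw t \<and> pw t \<le> 1"
  shows "0 \<le> Qf pw k u a"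
  unfolding Qf_def qf_def using assms by (intro prod_nonneg) auto

lemma Qf_diag: "Qf pw k a a = (\<Prod>t<k. pw t)"
  by (simp add: Qf_def qf_def)

lemma Qf_le:
  assumes "\<forall>t<k. 1/2 \<le> pw t \<and> pw t \<le> 1"
  shows "Qf pw k u a \<le> (\<Prod>t<k. pw t)"
  unfolding Qf_def qf_def using assms by (intro prod_mono) auto

lemma Qf_ge:
  assumes "\<forall>t<k. 1/2 \<le> pw t \<and> pw t \<le> 1"
  shows "(\<Prod>t<k. 1 - pw t) \<le> Qf pw k u a"
  unfolding Qf_def qf_def using assms by (intro prod_mono) auto

lemma log_prod2:
  fixes f :: "nat \<Rightarrow> real"
  assumes "finite I" "\<And>i. i \<in> I \<Longrightarrow> f i \<noteq> 0"
  shows "log 2 (prod f I) = (\<Sum>i\<in>I. log 2 (f i))"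
  using ln_prod[OF assms] by (simp add: log_def sum_divide_distrib)

lemma plogp_Qf:
  "plogp (Qf pw k u a) = Qf pw k u a * (\<Sum>t<k. log 2 (qf pw u t (a ! t)))"
proof (cases "Qf pw k u a = 0")
  case True then show ?thesis by (simp add: plogp_def)
next
  case False
  then have "\<And>t. t \<in> {..<k} \<Longrightarrow> qf pw u t (a ! t) \<noteq> 0"
    unfolding Qf_def by auto
  then show ?thesis
    unfolding plogp_eq by (subst (2) Qf_def, subst log_prod2) auto
qed

lemma ent_Qf:
  assumes "\<forall>t<k. 0 \<le> pw t \<and> pw t \<le> 1"
  shows "(\<Sum>a\<in>vecs k. plogp (Qf pw k u a)) = (\<Sum>t<k. plogp (pw t) + plogp (1 - pw t))"
proof -
  have "(\<Sum>a\<in>vecs k. plogp (Qf pw k u a))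
      = (\<Sum>t<k. \<Sum>a\<in>vecs k. Qf pw k u a * log 2 (qf pw u t (a ! t)))"
    by (simp add: plogp_Qf sum_distrib_left sum.swap[of _ "vecs k"])
  also have "\<dots> = (\<Sum>t<k. plogp (pw t) + plogp (1 - pw t))"
  proof (rule sum.cong[OF refl])
    fix t assume t: "t \<in> {..<k}"
    define g where "g s b = qf pw u s b * (if s = t then log 2 (qf pw u s b) else 1)" for s b
    have "\<And>a. Qf pw k u a * log 2 (qf pw u t (a ! t)) = (\<Prod>s<k. g s (a ! s))"
      unfolding g_def Qf_def prod.distrib using t by simp
    then have "(\<Sum>a\<in>vecs k. Qf pw k u a * log 2 (qf pw u t (a ! t)))
        = (\<Prod>s<k. g s True + g s False)"
      by (simp add: sum_prod_vecs)
    also have "\<dots> = (\<Prod>s<k. if s = t then g t True + g t False else 1)"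
      by (rule prod.cong) (auto simp: g_def qf_sum)
    also have "\<dots> = g t True + g t False" using t by simp
    also have "\<dots> = plogp (pw t) + plogp (1 - pw t)"
      by (cases "u ! t") (auto simp: g_def qf_def plogp_eq)
    finally show "(\<Sum>a\<in>vecs k. Qf pw k u a * log 2 (qf pw u t (a ! t)))
        = plogp (pw t) + plogp (1 - pw t)" .
  qed
  finally show ?thesis .
qed


lemma ln_pt:
  fixes x y S T :: real
  assumes "x > 0" "y > 0" "S > 0" "T > 0"
  shows "x * ln (x / y) \<ge> x * ln (S / T) + x - y * S / T"
proof -
  define z where "z = y * S / (x * T)"
  have zp: "z > 0" using assms by (simp add: z_def)
  have lz: "ln z = ln y + ln S - ln x - ln T"
    using assms by (simp add: z_def ln_div ln_mult)
  have "ln z \<le> z - 1" using ln_le_minus_one[OF zp] .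
  then have "x * (ln (x / y) - ln (S / T)) \<ge> x * (1 - z)"
    using assms lz by (intro mult_left_mono) (auto simp: ln_div)
  moreover have "x * (1 - z) = x - y * S / T" using assms by (simp add: z_def field_simps)
  ultimately show ?thesis by (simp add: algebra_simps)
qed

lemma log_sum_ineq:
  fixes x y :: "'i \<Rightarrow> real"
  assumes fin: "finite I" and x0: "\<forall>i\<in>I. 0 \<le> x i" and y0: "\<forall>i\<in>I. 0 \<le> y i"
    and xy: "\<forall>i\<in>I. 0 < x i \<longrightarrow> 0 < y i"
    and S: "sum x I = S" and T: "sum y I \<le> T" and Tp: "0 < T"
  shows "- (\<Sum>i\<in>I. x i * log 2 (x i / y i)) \<le> - (S * log 2 (S / T))"
proof (cases "S = 0")
  case True
  then have "\<forall>i\<in>I. x i = 0" using S x0 fin sum_nonneg_eq_0_iff by blast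
  then show ?thesis using True by simp
next
  case False
  then have Sp: "S > 0" using S x0 sum_nonneg[of I x] by force
  have pt: "x i * ln (x i / y i) \<ge> x i * ln (S / T) + x i - y i * S / T" if i: "i \<in> I" for i
  proof (cases "x i = 0")
    case True then show ?thesis using y0 i Sp Tp by simp
  next
    case False
    then show ?thesis using ln_pt[of "x i" "y i" S T] x0 xy i Sp Tp by auto
  qed
  have "(\<Sum>i\<in>I. x i * ln (x i / y i)) \<ge> (\<Sum>i\<in>I. x i * ln (S / T) + x i - y i * S / T)"
    using pt by (intro sum_mono) auto
  moreover have "(\<Sum>i\<in>I. x i * ln (S / T) + x i - y i * S / T)
      = S * ln (S / T) + S - (sum y I) * S / T"
    using S by (simp add: sum.distrib sum_subtractf sum_distrib_right[symmetric] sum_divide_distrib[symmetric])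
  moreover have "(sum y I) * S / T \<le> S"
    using T Sp Tp by (simp add: field_simps mult_right_mono)
  ultimately have "(\<Sum>i\<in>I. x i * ln (x i / y i)) \<ge> S * ln (S / T)" by linarith
  then have "(\<Sum>i\<in>I. x i * ln (x i / y i)) / ln 2 \<ge> S * ln (S / T) / ln 2"
    by (intro divide_right_mono) auto
  then show ?thesis
    by (simp add: log_def sum_divide_distrib[symmetric])
qed


lemma plogp_mult:
  assumes "0 \<le> x" "0 \<le> y"
  shows "plogp (x * y) = y * plogp x + x * plogp y"
  using assms by (cases "x = 0 \<or> y = 0") (auto simp: plogp_eq log_mult algebra_simps)

locale ent_setup =
  fixes k :: nat and pw :: "nat \<Rightarrow> real" and pU :: "bool list \<Rightarrow> real" and pA :: "bool list \<Rightarrow> real"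
  assumes pw: "\<forall>t<k. 1/2 \<le> pw t \<and> pw t \<le> 1"
    and pU0: "\<forall>u\<in>vecs k. 0 \<le> pU u"
    and pU1: "(\<Sum>u\<in>vecs k. pU u) = 1"
    and pA: "\<And>a. pA a = (\<Sum>u\<in>vecs k. pU u * Qf pw k u a)"
begin

abbreviation "V \<equiv> vecs k"
definition "J u a = pU u * Qf pw k u a"
definition "Off = {p \<in> V \<times> V. fst p \<noteq> snd p}"
abbreviation "\<pi> \<equiv> (\<Prod>t<k. pw t)"

lemma pw01: "\<forall>t<k. 0 \<le> pw t \<and> pw t \<le> 1" using pw by auto

lemma Q0: "0 \<le> Qf pw k u a" using Qf_nonneg[OF pw01] .

lemma J0: "u \<in> V \<Longrightarrow> 0 \<le> J u a" using pU0 Q0 by (simp add: J_def)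

lemma J_le: "u \<in> V \<Longrightarrow> J u a \<le> pA a"
proof -
  assume u: "u \<in> V"
  have "J u a = (\<Sum>v\<in>{u}. J v a)" by simp
  also have "\<dots> \<le> (\<Sum>v\<in>V. J v a)"
    using u J0 by (intro sum_mono2) (auto simp: finite_vecs)
  finally show ?thesis by (simp add: pA J_def)
qed

lemma pA0: "0 \<le> pA a" unfolding pA using pU0 Q0 by (intro sum_nonneg) auto

lemma pA1: "(\<Sum>a\<in>V. pA a) = 1"
  unfolding pA by (simp add: sum.swap[of _ V] sum_distrib_left[symmetric] sum_Qf pU1)

lemma sumJ: "(\<Sum>u\<in>V. \<Sum>a\<in>V. J u a) = 1"
  by (simp add: J_def sum_distrib_left[symmetric] sum_Qf pU1)

lemma split_sum:
  "(\<Sum>u\<in>V. \<Sum>a\<in>V. g u a) = (\<Sum>a\<in>V. g a a) + (\<Sum>p\<in>Off. g (fst p) (snd p))"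
proof -
  have un: "V \<times> V = (\<lambda>a. (a,a)) ` V \<union> Off" by (auto simp: Off_def)
  have dj: "(\<lambda>a. (a,a)) ` V \<inter> Off = {}" by (auto simp: Off_def)
  have fin: "finite Off" unfolding Off_def by (auto simp: finite_vecs)
  have "(\<Sum>u\<in>V. \<Sum>a\<in>V. g u a) = (\<Sum>p\<in>V \<times> V. g (fst p) (snd p))"
    by (simp add: sum.cartesian_product case_prod_unfold)
  also have "\<dots> = (\<Sum>p\<in>(\<lambda>a. (a,a)) ` V. g (fst p) (snd p)) + (\<Sum>p\<in>Off. g (fst p) (snd p))"
    unfolding un by (rule sum.union_disjoint) (auto simp: finite_vecs fin dj)
  also have "(\<Sum>p\<in>(\<lambda>a. (a,a)) ` V. g (fst p) (snd p)) = (\<Sum>a\<in>V. g a a)"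
    by (subst sum.reindex) (auto simp: inj_on_def)
  finally show ?thesis .
qed

lemma finOff: "finite Off" unfolding Off_def by (auto simp: finite_vecs)

lemma sumJdiag: "(\<Sum>a\<in>V. J a a) = \<pi>"
  by (simp add: J_def Qf_diag sum_distrib_right[symmetric] pU1)

lemma sumJoff: "(\<Sum>p\<in>Off. J (fst p) (snd p)) = 1 - \<pi>"
  using split_sum[of J] sumJ sumJdiag by simp

end


context ent_setup begin

definition "HA = - (\<Sum>a\<in>V. plogp (pA a))"
definition "HU = - (\<Sum>u\<in>V. plogp (pU u))"
definition "HW = (\<Sum>t<k. H_W (pw t))"

lemma HJ: "- (\<Sum>u\<in>V. \<Sum>a\<in>V. plogp (J u a)) = HU + HW"
proof -
  have "(\<Sum>u\<in>V. \<Sum>a\<in>V. plogp (J u a))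
      = (\<Sum>u\<in>V. \<Sum>a\<in>V. Qf pw k u a * plogp (pU u) + pU u * plogp (Qf pw k u a))"
    unfolding J_def using pU0 Q0 by (intro sum.cong refl plogp_mult) auto
  also have "\<dots> = (\<Sum>u\<in>V. plogp (pU u) + pU u * (\<Sum>t<k. plogp (pw t) + plogp (1 - pw t)))"
    by (simp add: sum.distrib sum_distrib_left[symmetric] sum_distrib_right[symmetric]
        sum_Qf ent_Qf[OF pw01])
  also have "\<dots> = - HU - HW"
    by (simp add: sum.distrib sum_distrib_right[symmetric] pU1 HU_def HW_def H_W_def
        sum_subtractf sum_negf)
  finally show ?thesis by simp
qed

lemma HA_le_HJ: "HA \<le> - (\<Sum>u\<in>V. \<Sum>a\<in>V. plogp (J u a))"
proof -
  have "(\<Sum>u\<in>V. plogp (J u a)) \<le> plogp (pA a)" for a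
  proof -
    have "(\<Sum>u\<in>V. plogp (J u a)) \<le> (\<Sum>u\<in>V. J u a * log 2 (pA a))"
    proof (rule sum_mono)
      fix u assume u: "u \<in> V"
      show "plogp (J u a) \<le> J u a * log 2 (pA a)"
      proof (cases "J u a = 0")
        case True then show ?thesis by (simp add: plogp_def)
      next
        case False
        then have "J u a > 0" using J0[OF u, of a] by auto
        then have "log 2 (J u a) \<le> log 2 (pA a)"
          using J_le[OF u, of a] \<open>J u a > 0\<close> by (intro log_mono) auto
        then show ?thesis using \<open>J u a > 0\<close>
          unfolding plogp_eq by (intro mult_left_mono) auto
      qed
    qed
    also have "\<dots> = plogp (pA a)"
      by (simp add: plogp_eq sum_distrib_right[symmetric] pA J_def)
    finally show ?thesis .
  qed
  then have "(\<Sum>a\<in>V. \<Sum>u\<in>V. plogp (J u a)) \<le> (\<Sum>a\<in>V. plogp (pA a))"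
    by (intro sum_mono) auto
  moreover have "(\<Sum>a\<in>V. \<Sum>u\<in>V. plogp (J u a)) = (\<Sum>u\<in>V. \<Sum>a\<in>V. plogp (J u a))"
    by (rule sum.swap)
  ultimately show ?thesis unfolding HA_def by linarith
qed

lemma HA_upper2:
  assumes "\<forall>t<k. pw t \<noteq> 1"
  shows "HA \<le> - (\<Sum>t<k. log 2 (1 - pw t))"
proof -
  define \<beta> where "\<beta> = (\<Prod>t<k. 1 - pw t)"
  have bp: "\<beta> > 0" unfolding \<beta>_def using assms pw by (intro prod_pos) force
  have ge: "\<beta> \<le> pA a" for a
  proof -
    have "\<beta> = (\<Sum>u\<in>V. pU u * \<beta>)" by (simp add: sum_distrib_right[symmetric] pU1)
    also have "\<dots> \<le> pA a" unfolding pA \<beta>_def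
      using Qf_ge[OF pw] pU0 by (intro sum_mono mult_left_mono) auto
    finally show ?thesis .
  qed
  have "(\<Sum>a\<in>V. pA a * log 2 \<beta>) \<le> (\<Sum>a\<in>V. plogp (pA a))"
  proof (rule sum_mono)
    fix a
    have "pA a > 0" using ge[of a] bp by linarith
    then show "pA a * log 2 \<beta> \<le> plogp (pA a)"
      unfolding plogp_eq using ge[of a] bp by (intro mult_left_mono log_mono) auto
  qed
  moreover have "(\<Sum>a\<in>V. pA a * log 2 \<beta>) = log 2 \<beta>"
    by (simp add: sum_distrib_right[symmetric] pA1)
  moreover have "log 2 \<beta> = (\<Sum>t<k. log 2 (1 - pw t))"
    unfolding \<beta>_def using assms pw by (intro log_prod2) force+
  ultimately show ?thesis unfolding HA_def by linarith
qed

lemma pi_pos: "\<pi> > 0" using pw by (intro prod_pos) force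

lemma pi_le1: "\<pi> \<le> 1" using pw by (intro prod_le_1) auto

lemma HA_lower1: "- (\<Sum>t<k. log 2 (pw t)) \<le> HA"
proof -
  have le: "pA a \<le> \<pi>" for a
  proof -
    have "pA a \<le> (\<Sum>u\<in>V. pU u * \<pi>)" unfolding pA
      using Qf_le[OF pw] pU0 by (intro sum_mono mult_left_mono) auto
    also have "\<dots> = \<pi>" by (simp add: sum_distrib_right[symmetric] pU1)
    finally show ?thesis .
  qed
  have "(\<Sum>a\<in>V. plogp (pA a)) \<le> (\<Sum>a\<in>V. pA a * log 2 \<pi>)"
  proof (rule sum_mono)
    fix a
    show "plogp (pA a) \<le> pA a * log 2 \<pi>"
    proof (cases "pA a = 0")
      case True then show ?thesis by (simp add: plogp_def)
    next
      case False
      then have "pA a > 0" using pA0[of a] by auto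
      then show ?thesis unfolding plogp_eq using le[of a] by (intro mult_left_mono log_mono) auto
    qed
  qed
  moreover have "(\<Sum>a\<in>V. pA a * log 2 \<pi>) = log 2 \<pi>"
    by (simp add: sum_distrib_right[symmetric] pA1)
  moreover have "log 2 \<pi> = (\<Sum>t<k. log 2 (pw t))"
    using pw by (intro log_prod2) force+
  ultimately show ?thesis unfolding HA_def by linarith
qed

end

context ent_setup begin

definition "G u a = J u a * log 2 (J u a / pA a)"

lemma pA_pos: "u \<in> V \<Longrightarrow> J u a > 0 \<Longrightarrow> pA a > 0"
  using J_le[of u a] by linarith

lemma HA_eq: "HA = HU + HW - (- (\<Sum>u\<in>V. \<Sum>a\<in>V. G u a))"
proof -
  have pt: "G u a - plogp (J u a) = - (J u a * log 2 (pA a))" if u: "u \<in> V" for u a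
  proof (cases "J u a = 0")
    case True then show ?thesis by (simp add: G_def plogp_def)
  next
    case False
    then have "J u a > 0" using J0[OF u, of a] by auto
    moreover have "pA a > 0" using pA_pos[OF u] calculation by auto
    ultimately show ?thesis by (simp add: G_def plogp_eq log_divide_pos algebra_simps)
  qed
  have "(\<Sum>u\<in>V. \<Sum>a\<in>V. G u a) - (\<Sum>u\<in>V. \<Sum>a\<in>V. plogp (J u a))
      = (\<Sum>u\<in>V. \<Sum>a\<in>V. G u a - plogp (J u a))"
    by (simp add: sum_subtractf)
  also have "\<dots> = (\<Sum>u\<in>V. \<Sum>a\<in>V. - (J u a * log 2 (pA a)))"
    using pt by (intro sum.cong refl) auto
  also have "\<dots> = (\<Sum>a\<in>V. \<Sum>u\<in>V. - (J u a * log 2 (pA a)))"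
    by (rule sum.swap)
  also have "\<dots> = (\<Sum>a\<in>V. - plogp (pA a))"
    by (intro sum.cong refl) (simp add: plogp_eq sum_negf sum_distrib_right[symmetric] pA J_def)
  also have "\<dots> = HA" by (simp add: HA_def sum_negf)
  finally show ?thesis using HJ by linarith
qed

lemma diag_bound: "- (\<Sum>a\<in>V. G a a) \<le> - plogp \<pi>"
proof -
  have "- (\<Sum>a\<in>V. J a a * log 2 (J a a / pA a)) \<le> - (\<pi> * log 2 (\<pi> / 1))"
    using J0 pA0 pA_pos sumJdiag pA1
    by (intro log_sum_ineq) (auto simp: finite_vecs)
  then show ?thesis by (simp add: G_def plogp_eq)
qed

lemma sum_pA_off: "(\<Sum>p\<in>Off. pA (snd p)) = 2 ^ k - 1"
proof -
  have "(\<Sum>u\<in>V. \<Sum>a\<in>V. pA a) = 2 ^ k" by (simp add: pA1 card_vecs)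
  then show ?thesis using split_sum[of "\<lambda>u a. pA a"] pA1 by simp
qed

lemma off1:
  assumes "k \<ge> 1"
  shows "- (\<Sum>p\<in>Off. G (fst p) (snd p)) \<le> - plogp (1 - \<pi>) + (1 - \<pi>) * log 2 (2 ^ k - 1)"
proof -
  have T: "(0::real) < 2 ^ k - 1"
  proof -
    have "(2::real) ^ 1 \<le> 2 ^ k" using assms by (intro power_increasing) auto
    then show ?thesis by simp
  qed
  have "- (\<Sum>p\<in>Off. J (fst p) (snd p) * log 2 (J (fst p) (snd p) / pA (snd p)))
      \<le> - ((1 - \<pi>) * log 2 ((1 - \<pi>) / (2 ^ k - 1)))"
    using J0 pA0 pA_pos sumJoff sum_pA_off T
    by (intro log_sum_ineq) (use finOff[unfolded Off_def] in \<open>auto simp: Off_def\<close>)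
  moreover have "(1 - \<pi>) * log 2 ((1 - \<pi>) / (2 ^ k - 1)) = plogp (1 - \<pi>) - (1 - \<pi>) * log 2 (2 ^ k - 1)"
  proof (cases "\<pi> = 1")
    case True then show ?thesis by (simp add: plogp_def)
  next
    case False
    then have "1 - \<pi> > 0" using pi_le1 by auto
    then show ?thesis using T by (simp add: log_divide_pos plogp_eq algebra_simps)
  qed
  ultimately show ?thesis by (simp add: G_def)
qed

lemma off2: "- (\<Sum>p\<in>Off. G (fst p) (snd p)) \<le> - plogp (1 - \<pi>) + (1 - \<pi>) * HU"
proof -
  define y where "y p = pA (snd p) * pU (fst p)" for p
  have y0: "\<forall>p\<in>Off. 0 \<le> y p" using pA0 pU0 by (auto simp: y_def Off_def)
  have ysum: "sum y Off \<le> 1"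
  proof -
    have "(\<Sum>u\<in>V. \<Sum>a\<in>V. pA a * pU u) = 1"
      by (simp add: sum_distrib_left[symmetric] sum_distrib_right[symmetric] pA1 pU1)
    moreover have "0 \<le> (\<Sum>a\<in>V. pA a * pU a)" using pA0 pU0 by (intro sum_nonneg) auto
    ultimately show ?thesis using split_sum[of "\<lambda>u a. pA a * pU u"] by (simp add: y_def)
  qed
  have Jpos: "J u a > 0 \<Longrightarrow> pU u > 0" if "u \<in> V" for u a
    using that pU0 by (auto simp: J_def less_le)
  have "- (\<Sum>p\<in>Off. J (fst p) (snd p) * log 2 (J (fst p) (snd p) / y p))
      \<le> - ((1 - \<pi>) * log 2 ((1 - \<pi>) / 1))"
    using J0 y0 sumJoff ysum pA_pos Jpos
    by (intro log_sum_ineq) (use finOff[unfolded Off_def] in \<open>auto simp: Off_def y_def\<close>)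
  then have A: "- (\<Sum>p\<in>Off. J (fst p) (snd p) * log 2 (J (fst p) (snd p) / y p)) \<le> - plogp (1 - \<pi>)"
    by (simp add: plogp_eq)
  have pt: "G (fst p) (snd p) = J (fst p) (snd p) * log 2 (J (fst p) (snd p) / y p)
       + J (fst p) (snd p) * log 2 (pU (fst p))" if p: "p \<in> Off" for p
  proof (cases "J (fst p) (snd p) = 0")
    case True then show ?thesis by (simp add: G_def)
  next
    case False
    have u: "fst p \<in> V" using p by (auto simp: Off_def)
    have j: "J (fst p) (snd p) > 0" using False J0[OF u, of "snd p"] by auto
    have a: "pA (snd p) > 0" using pA_pos[OF u j] .
    have b: "pU (fst p) > 0" using Jpos[OF u j] .
    show ?thesis using j a b
      by (simp add: G_def y_def log_divide_pos log_mult_pos algebra_simps)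
  qed
  have B: "(\<Sum>p\<in>Off. J (fst p) (snd p) * log 2 (pU (fst p))) = - ((1 - \<pi>) * HU)"
  proof -
    have "(\<Sum>u\<in>V. \<Sum>a\<in>V. J u a * log 2 (pU u)) = - HU"
      by (simp add: J_def HU_def plogp_eq sum_negf mult.commute[of "pU _"] mult.assoc
          sum_distrib_left[symmetric] sum_distrib_right[symmetric] sum_Qf)
    moreover have "(\<Sum>a\<in>V. J a a * log 2 (pU a)) = - (\<pi> * HU)"
      by (simp add: J_def HU_def plogp_eq Qf_diag sum_distrib_left algebra_simps)
    ultimately show ?thesis using split_sum[of "\<lambda>u a. J u a * log 2 (pU u)"]
      by (simp add: algebra_simps)
  qed
  have "(\<Sum>p\<in>Off. G (fst p) (snd p)) = (\<Sum>p\<in>Off. J (fst p) (snd p) * log 2 (J (fst p) (snd p) / y p))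
       + (\<Sum>p\<in>Off. J (fst p) (snd p) * log 2 (pU (fst p)))"
    using pt by (simp add: sum.distrib[symmetric])
  then show ?thesis using A B by (simp add: algebra_simps)
qed

lemma HA_lower2:
  assumes "k \<ge> 1"
  shows "HU + HW + plogp \<pi> + plogp (1 - \<pi>) - (1 - \<pi>) * min (log 2 (2 ^ k - 1)) HU \<le> HA"
proof -
  have sp: "(\<Sum>u\<in>V. \<Sum>a\<in>V. G u a) = (\<Sum>a\<in>V. G a a) + (\<Sum>p\<in>Off. G (fst p) (snd p))"
    by (rule split_sum)
  have n: "0 \<le> 1 - \<pi>" using pi_le1 by simp
  show ?thesis
  proof (cases "log 2 (2 ^ k - 1) \<le> HU")
    case True
    then show ?thesis using HA_eq sp diag_bound off1[OF assms] by simp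
  next
    case False
    then show ?thesis using HA_eq sp diag_bound off2 by simp
  qed
qed

end

theorem theorem4p2:
  fixes C :: "'c set" and R :: "'c set set" and P :: "'c set \<Rightarrow> real"
    and c :: "nat \<Rightarrow> 'c" and pw :: "nat \<Rightarrow> real" and k :: nat
  assumes "finite R"
    and "\<forall>m\<in>R. m \<subseteq> C"
    and "\<forall>m\<in>R. 0 \<le> P m \<and> P m \<le> 1"
    and "(\<Sum>m\<in>R. P m) = 1"
    and "k \<ge> 1"
    and "inj_on c {..<k}"
    and "\<forall>t<k. c t \<in> C"
    and "\<forall>t<k. 1/2 \<le> pw t \<and> pw t \<le> 1"
  shows "h_lower R P c pw k \<le> H_A R P c pw k
       \<and> ereal (H_A R P c pw k) \<le> h_upper R P c pw k"
proof -
  define vec where "vec m = map (\<lambda>t. c t \<in> m) [0..<k]" for m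
  have img: "vec ` R \<subseteq> vecs k" by (auto simp: vec_def vecs_def)
  have pUdef: "probU R P c k u = (\<Sum>m\<in>{m\<in>R. vec m = u}. P m)" for u
    by (simp add: probU_def vec_def)
  have pU1: "(\<Sum>u\<in>vecs k. probU R P c k u) = 1"
    unfolding pUdef using sum.group[OF assms(1) finite_vecs img, of P] assms(4) by simp
  have pU0: "\<forall>u\<in>vecs k. 0 \<le> probU R P c k u"
    unfolding pUdef using assms(3) by (auto intro: sum_nonneg)
  have pA: "probA R P c pw k a = (\<Sum>u\<in>vecs k. probU R P c k u * Qf pw k u a)" for a
  proof -
    have "probA R P c pw k a = (\<Sum>m\<in>R. P m * Qf pw k (vec m) a)"
      unfolding probA_def Qf_def qf_def vec_def
      by (intro sum.cong refl arg_cong[where f="\<lambda>x. P _ * x"] prod.cong) auto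
    also have "\<dots> = (\<Sum>u\<in>vecs k. \<Sum>m\<in>{m\<in>R. vec m = u}. P m * Qf pw k (vec m) a)"
      using sum.group[OF assms(1) finite_vecs img, of "\<lambda>m. P m * Qf pw k (vec m) a"] by simp
    also have "\<dots> = (\<Sum>u\<in>vecs k. probU R P c k u * Qf pw k u a)"
      unfolding pUdef by (intro sum.cong refl) (simp add: sum_distrib_right)
    finally show ?thesis .
  qed
  interpret E: ent_setup k pw "probU R P c k" "probA R P c pw k"
    using assms(8) pU0 pU1 pA by unfold_locales auto
  have HA: "H_A R P c pw k = E.HA" by (simp add: H_A_def E.HA_def)
  have HU: "H_U R P c k = E.HU" by (simp add: H_U_def E.HU_def)
  have HW: "(\<Sum>t<k. H_W (pw t)) = E.HW" by (simp add: E.HW_def)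
  have low: "h_lower R P c pw k \<le> H_A R P c pw k"
    unfolding h_lower_def Let_def HA HU HW
    using E.HA_lower1 E.HA_lower2[OF assms(5)] by simp
  have up1: "E.HA \<le> E.HU + E.HW" using E.HA_le_HJ E.HJ by simp
  have up: "ereal (H_A R P c pw k) \<le> h_upper R P c pw k"
  proof (cases "\<exists>t<k. pw t = 1")
    case True then show ?thesis unfolding h_upper_def HA HU HW using up1 by simp
  next
    case False
    then show ?thesis unfolding h_upper_def HA HU HW using up1 E.HA_upper2 by simp
  qed
  show ?thesis using low up by simp
qed

end
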